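(* Let $g$ be a $C^1$ function near $0$ in $\mathbb{R}$ with $g(0)=0$, $g'(0)>0$, and let $V(x)=\int_0^x g(s)\,ds$. Let $J\ni 0$ be an open interval such that $V$ is strictly increasing on $J\cap(0,\infty)$, strictly decreasing on $J\cap(-\infty,0)$, and for each $x\in J$ there is a unique $h(x)\in J$ with $V(h(x))=V(x)$ and $\operatorname{sgn}h(x)=-\operatorname{sgn}x$. Fix $x_0\in J$ with $x_0>0$, let $t\mapsto X(t,x_0)$ be the (periodic) solution of $\ddot x=-g(x)$ with $X(0,x_0)=x_0$, $\partial_tX(0,x_0)=0$, and let $\mathcal T(x_0)$ be its period. Consider the $\mathcal T(x_0)$-periodic linear equation \[ \ddot y=-g'\big(X(t,x_0)\big)\,y . \] Then either all solutions of this equation are $\mathcal T(x_0)$-periodic, or all its solutions are unbounded except those proportional to $t\mapsto\partial_tX(t,x_0)$. A necessary and sufficient condition for the former case is $\mathcal T'(x_0)=0$.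
   Context: $\mathcal T$ is $C^1$ on $\{x_0\in J:x_0>0\}$, so $\mathcal T'(x_0)$ is defined. *)

theory Defs
  imports "HOL-Analysis.Analysis"
begin

definition potential :: "(real \<Rightarrow> real) \<Rightarrow> real \<Rightarrow> real" where
  "potential g x = (if 0 \<le> x then integral {0..x} g else - integral {x..0} g)"

definition hill_solution :: "(real \<Rightarrow> real) \<Rightarrow> (real \<Rightarrow> real) \<Rightarrow> bool" where
  "hill_solution q y \<longleftrightarrow> (\<exists>y'. \<forall>t. (y has_real_derivative y' t) (at t) \<and>
                                      (y' has_real_derivative (- q t * y t)) (at t))"

end

theory Submission
  imports Defs
begin

lemma gronwall_fwd:
  fixes E E' :: "real \<Rightarrow> real"
  assumes d: "\<And>t. (E has_real_derivative E' t) (at t)" and b: "\<And>t. E' t \<le> K * E t" and t: "t \<ge> 0"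
  shows "E t \<le> E 0 * exp (K * t)"
proof -
  define F where "F s = E s * exp (- K * s)" for s
  have dF: "(F has_real_derivative (E' s - K * E s) * exp (- K * s)) (at s)" for s
    unfolding F_def
    by (rule derivative_eq_intros d refl | simp add: algebra_simps)+
  have "F t \<le> F 0"
    apply (rule DERIV_nonpos_imp_nonincreasing[OF t])
    using dF b by (meson mult_nonneg_nonpos2 exp_ge_zero diff_le_0_iff_le)
  hence "E t * exp (- K * t) \<le> E 0" by (simp add: F_def)
  hence "E t * exp (- K * t) * exp (K * t) \<le> E 0 * exp (K * t)" by (simp add: mult_right_mono)
  thus ?thesis by (simp add: exp_minus field_simps)
qed

lemma ode_energy:
  fixes y yd F :: "real \<Rightarrow> real"
  assumes d1: "\<And>t. (y has_real_derivative yd t) (at t)" and d2: "\<And>t. (yd has_real_derivative F t) (at t)"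
    and b: "\<And>t. \<bar>F t\<bar> \<le> L * \<bar>y t\<bar>" and L: "L \<ge> 0" and t: "t \<ge> 0"
  shows "(y t)\<^sup>2 + (yd t)\<^sup>2 \<le> ((y 0)\<^sup>2 + (yd 0)\<^sup>2) * exp ((1 + L) * t)"
proof -
  have dE: "((\<lambda>s. (y s)\<^sup>2 + (yd s)\<^sup>2) has_real_derivative 2 * y s * yd s + 2 * yd s * F s) (at s)" for s
    by (rule derivative_eq_intros d1 d2 refl | simp)+
  have bd: "2 * y s * yd s + 2 * yd s * F s \<le> (1 + L) * ((y s)\<^sup>2 + (yd s)\<^sup>2)" for s
  proof -
    have a1: "2 * y s * yd s \<le> (y s)\<^sup>2 + (yd s)\<^sup>2"
      using sum_squares_bound[of "y s" "yd s"] by simp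
    have "2 * yd s * F s \<le> 2 * \<bar>yd s\<bar> * \<bar>F s\<bar>" by (simp add: abs_mult[symmetric])
    also have "\<dots> \<le> 2 * \<bar>yd s\<bar> * (L * \<bar>y s\<bar>)" using b[of s] by (simp add: mult_left_mono)
    also have "\<dots> = L * (2 * \<bar>yd s\<bar> * \<bar>y s\<bar>)" by simp
    also have "\<dots> \<le> L * ((y s)\<^sup>2 + (yd s)\<^sup>2)"
      apply (rule mult_left_mono[OF _ L])
      using sum_squares_bound[of "\<bar>yd s\<bar>" "\<bar>y s\<bar>"] by (simp add: add.commute)
    finally show ?thesis using a1 by (simp add: algebra_simps)
  qed
  show ?thesis using gronwall_fwd[OF dE bd t] by simp
qed

lemma ode_zero:
  fixes y yd F :: "real \<Rightarrow> real"
  assumes d1: "\<And>t. (y has_real_derivative yd t) (at t)" and d2: "\<And>t. (yd has_real_derivative F t) (at t)"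
    and b: "\<And>t. \<bar>F t\<bar> \<le> L * \<bar>y t\<bar>" and L: "L \<ge> 0" and z: "y t0 = 0" "yd t0 = 0"
  shows "y t = 0"
proof (cases "t0 \<le> t")
  case True
  have a1: "((\<lambda>s. y (t0 + s)) has_real_derivative yd (t0 + s)) (at s)" for s
    using DERIV_chain2[OF d1 DERIV_add[OF DERIV_const[of t0] DERIV_ident]] by simp
  have a2: "((\<lambda>s. yd (t0 + s)) has_real_derivative F (t0 + s)) (at s)" for s
    using DERIV_chain2[OF d2 DERIV_add[OF DERIV_const[of t0] DERIV_ident]] by simp
  have "(y (t0 + (t - t0)))\<^sup>2 + (yd (t0 + (t - t0)))\<^sup>2 \<le> ((y (t0+0))\<^sup>2 + (yd (t0+0))\<^sup>2) * exp ((1 + L) * (t - t0))"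
    by (rule ode_energy[OF a1 a2 _ L, of "t - t0"]) (use b True in auto)
  hence "(y t)\<^sup>2 + (yd t)\<^sup>2 \<le> 0" using z by simp
  thus ?thesis by (simp add: sum_power2_le_zero_iff)
next
  case False
  have a1: "((\<lambda>s. y (t0 - s)) has_real_derivative - yd (t0 - s)) (at s)" for s
    using DERIV_chain2[OF d1 DERIV_diff[OF DERIV_const[of t0] DERIV_ident]] by simp
  have a2: "((\<lambda>s. - yd (t0 - s)) has_real_derivative F (t0 - s)) (at s)" for s
    using DERIV_minus[OF DERIV_chain2[OF d2 DERIV_diff[OF DERIV_const[of t0] DERIV_ident]]] by simp
  have "(y (t0 - (t0 - t)))\<^sup>2 + (- yd (t0 - (t0 - t)))\<^sup>2 \<le> ((y (t0-0))\<^sup>2 + (- yd (t0-0))\<^sup>2) * exp ((1 + L) * (t0 - t))"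
    by (rule ode_energy[OF a1 a2 _ L, of "t0 - t"]) (use b False in auto)
  hence "(y t)\<^sup>2 + (yd t)\<^sup>2 \<le> 0" using z by simp
  thus ?thesis by (simp add: sum_power2_le_zero_iff)
qed

lemma potential_deriv:
  fixes f :: "real \<Rightarrow> real"
  assumes I: "open I" "is_interval I" "0 \<in> I" and c: "continuous_on I f" and x: "x \<in> I"
  shows "(potential f has_real_derivative f x) (at x)"
proof -
  have m1: "min x 0 \<in> I" using x I(3) by (simp add: min_def)
  have m2: "max x 0 \<in> I" using x I(3) by (simp add: max_def)
  obtain e where e: "e > 0" "ball (min x 0) e \<subseteq> I" using openE[OF I(1) m1] by blast
  obtain e2 where e2: "e2 > 0" "ball (max x 0) e2 \<subseteq> I" using openE[OF I(1) m2] by blast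
  define a where "a = min x 0 - e/2"
  define b where "b = max x 0 + e2/2"
  have "a \<in> ball (min x 0) e" using e by (simp add: a_def dist_real_def)
  hence aI: "a \<in> I" using e(2) by blast
  have "b \<in> ball (max x 0) e2" using e2 by (simp add: b_def dist_real_def)
  hence bI: "b \<in> I" using e2(2) by blast
  have "\<forall>y. a \<le> y \<and> y \<le> b \<longrightarrow> y \<in> I" using I(2) aI bI unfolding is_interval_1 by blast
  hence sub: "{a..b} \<subseteq> I" by auto
  have cab: "continuous_on {a..b} f" using c sub continuous_on_subset by blast
  have int: "f integrable_on {u..v}" if "a \<le> u" "v \<le> b" for u v
  proof (rule integrable_continuous_real)
    have "{u..v} \<subseteq> {a..b}" using that by auto
    thus "continuous_on {u..v} f" using continuous_on_subset[OF cab] by blast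
  qed
  have eq: "potential f u = integral {a..u} f - integral {a..0} f" if u: "u \<in> {a<..<b}" for u
  proof (cases "0 \<le> u")
    case True
    have a0: "a \<le> 0" using e by (auto simp: a_def min_def)
    have "f integrable_on {a..u}" using int[of a u] u by simp
    from Henstock_Kurzweil_Integration.integral_combine[OF a0 True this]
    show ?thesis using True by (simp add: potential_def)
  next
    case False
    have "a \<le> u" using u by simp
    moreover have "u \<le> 0" using False by simp
    moreover have "f integrable_on {a..0}" using int[of a 0] e2 by (auto simp: b_def max_def)
    ultimately have "integral {a..u} f + integral {u..0} f = integral {a..0} f"
      by (rule Henstock_Kurzweil_Integration.integral_combine)
    thus ?thesis using False by (simp add: potential_def)
  qed
  have xab: "x \<in> {a<..<b}" using e e2 by (auto simp: a_def b_def min_def max_def)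
  have "((\<lambda>u. integral {a..u} f) has_real_derivative f x) (at x within {a..b})"
    by (rule integral_has_real_derivative[OF cab]) (use xab in auto)
  hence "((\<lambda>u. integral {a..u} f) has_real_derivative f x) (at x)"
    using xab by (subst (asm) at_within_interior[of x]) auto
  hence "((\<lambda>u. integral {a..u} f - integral {a..0} f) has_real_derivative f x - 0) (at x)"
    by (rule DERIV_diff[OF _ DERIV_const])
  hence "((\<lambda>u. integral {a..u} f - integral {a..0} f) has_real_derivative f x) (at x)" by simp
  thus ?thesis
    by (rule has_field_derivative_transform_within_open[OF _ _ xab]) (auto simp: eq)
qed


lemma confine:
  fixes g Y Yd :: "real \<Rightarrow> real"
  assumes J: "open J" "is_interval J" "0 \<in> J" and gc: "continuous_on J g" and sub: "{h1..x1} \<subseteq> J"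
    and dY: "\<And>t. (Y has_real_derivative Yd t) (at t)" and dYd: "\<And>t. (Yd has_real_derivative - g (Y t)) (at t)"
    and Y0: "h1 < Y 0" "Y 0 < x1"
    and E0: "(Yd 0)\<^sup>2/2 + potential g (Y 0) < potential g h1" "(Yd 0)\<^sup>2/2 + potential g (Y 0) < potential g x1"
    and t: "t \<ge> 0"
  shows "h1 < Y t \<and> Y t < x1"
proof (rule ccontr)
  assume nt: "\<not> (h1 < Y t \<and> Y t < x1)"
  have contY: "continuous_on A Y" for A
    using dY by (meson DERIV_isCont continuous_at_imp_continuous_on)
  define S where "S = {s \<in> {0..t}. Y s \<le> h1 \<or> x1 \<le> Y s}"
  have S_eq: "S = Y -` ({..h1} \<union> {x1..}) \<inter> {0..t}" by (auto simp: S_def)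
  have clS: "closed S" unfolding S_eq by (rule closed_vimage_Int) (auto intro: contY)
  have tS: "t \<in> S" using nt t by (auto simp: S_def)
  have bdd: "bdd_below S" by (auto simp: S_def bdd_below_def)
  define ts where "ts = Inf S"
  have tsS: "ts \<in> S" unfolding ts_def using closed_contains_Inf[OF _ bdd clS] tS by blast
  have ts_le: "ts \<le> s" if "s \<in> S" for s unfolding ts_def using cInf_lower[OF that bdd] .
  have tst: "ts \<le> t" using ts_le[OF tS] .
  have inside: "h1 < Y s \<and> Y s < x1" if "0 \<le> s" "s < ts" for s
  proof -
    have "s \<notin> S" using ts_le that(2) by force
    thus ?thesis using that tst by (auto simp: S_def)
  qed
  have ts0: "0 \<le> ts" using tsS by (simp add: S_def)
  have tspos: "0 < ts"
  proof -
    have "0 \<notin> S" using Y0 by (auto simp: S_def)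
    thus ?thesis using ts0 tsS by (cases "ts = 0") auto
  qed
  have Yts: "Y ts = h1 \<or> Y ts = x1"
  proof -
    have "Y ts \<le> h1 \<or> x1 \<le> Y ts" using tsS by (simp add: S_def)
    thus ?thesis
    proof
      assume a: "Y ts \<le> h1"
      show ?thesis
      proof (rule ccontr)
        assume "\<not> ?thesis"
        hence a': "Y ts < h1" using a by auto
        obtain s where s: "0 \<le> s" "s \<le> ts" "Y s = h1"
          using IVT2'[of Y ts h1 0, OF a _ ts0 contY] Y0 by auto
        have "s < ts" using s a' by (cases "s = ts") auto
        thus False using inside[OF s(1)] s(3) by auto
      qed
    next
      assume a: "x1 \<le> Y ts"
      show ?thesis
      proof (rule ccontr)
        assume "\<not> ?thesis"
        hence a': "x1 < Y ts" using a by auto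
        obtain s where s: "0 \<le> s" "s \<le> ts" "Y s = x1"
          using IVT'[of Y 0 x1 ts, OF _ a ts0 contY] Y0 by auto
        have "s < ts" using s a' by (cases "s = ts") auto
        thus False using inside[OF s(1)] s(3) by auto
      qed
    qed
  qed
  have inJ: "Y s \<in> J" if "0 \<le> s" "s \<le> ts" for s
  proof (cases "s = ts")
    case True
    thus ?thesis using Yts Y0 sub by auto
  next
    case False
    thus ?thesis using inside[of s] that sub by auto
  qed
  define E where "E s = (Yd s)\<^sup>2/2 + potential g (Y s)" for s
  have dE: "(E has_real_derivative 0) (at s)" if "0 \<le> s" "s \<le> ts" for s
  proof -
    have pd: "(potential g has_real_derivative g (Y s)) (at (Y s))"
      by (rule potential_deriv[OF J gc inJ[OF that]])
    have c1: "((\<lambda>s. potential g (Y s)) has_real_derivative g (Y s) * Yd s) (at s)"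
      by (rule DERIV_chain2[OF pd dY])
    have c2: "((\<lambda>s. (Yd s)\<^sup>2) has_real_derivative of_nat 2 * (- g (Y s)) * (Yd s)^(2-1)) (at s)"
      using DERIV_mult[OF dYd dYd, of s] by (simp add: power2_eq_square algebra_simps)
    have c3: "((\<lambda>s. (Yd s)\<^sup>2 / 2) has_real_derivative of_nat 2 * (- g (Y s)) * (Yd s)^(2-1) / 2) (at s)"
      by (rule DERIV_cdivide[OF c2])
    have "(E has_real_derivative of_nat 2 * (- g (Y s)) * (Yd s)^(2-1) / 2 + g (Y s) * Yd s) (at s)"
      unfolding E_def by (rule DERIV_add[OF c3 c1])
    thus ?thesis by (rule DERIV_cong) simp
  qed
  have cE: "continuous_on {0..ts} E"
    using dE by (meson DERIV_isCont continuous_at_imp_continuous_on atLeastAtMost_iff)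
  have "E ts = E 0" by (rule DERIV_isconst_end[OF tspos cE]) (use dE in auto)
  moreover have "E 0 < potential g (Y ts)" using Yts E0 by (auto simp: E_def)
  moreover have "potential g (Y ts) \<le> E ts" by (simp add: E_def)
  ultimately show False by simp
qed

lemma mvt_between:
  fixes f f' :: "real \<Rightarrow> real"
  assumes d: "\<And>z. min a b \<le> z \<Longrightarrow> z \<le> max a b \<Longrightarrow> (f has_real_derivative f' z) (at z)"
  shows "\<exists>z. min a b \<le> z \<and> z \<le> max a b \<and> f a - f b = f' z * (a - b)"
proof (cases a b rule: linorder_cases)
  case less
  obtain z where z: "a < z" "z < b" "f b - f a = (b - a) * f' z"
    using MVT2[of a b f f'] less d by auto
  show ?thesis by (rule exI[of _ z]) (use z less in \<open>auto simp: algebra_simps\<close>)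
next
  case equal
  thus ?thesis by auto
next
  case greater
  obtain z where z: "b < z" "z < a" "f a - f b = (a - b) * f' z"
    using MVT2[of b a f f'] greater d by auto
  show ?thesis by (rule exI[of _ z]) (use z greater in \<open>auto simp: algebra_simps\<close>)
qed

lemma mvt_abs_bound:
  fixes f f' :: "real \<Rightarrow> real"
  assumes d: "\<And>z. min a b \<le> z \<Longrightarrow> z \<le> max a b \<Longrightarrow> (f has_real_derivative f' z) (at z)"
    and B: "\<And>z. min a b \<le> z \<Longrightarrow> z \<le> max a b \<Longrightarrow> \<bar>f' z\<bar> \<le> B"
  shows "\<bar>f a - f b\<bar> \<le> B * \<bar>a - b\<bar>"
proof -
  obtain z where z: "min a b \<le> z" "z \<le> max a b" "f a - f b = f' z * (a - b)"
    using mvt_between[OF d] by blast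
  have "\<bar>f a - f b\<bar> = \<bar>f' z\<bar> * \<bar>a - b\<bar>" using z(3) by (simp add: abs_mult)
  also have "\<dots> \<le> B * \<bar>a - b\<bar>" using B[OF z(1,2)] by (simp add: mult_right_mono)
  finally show ?thesis .
qed

lemma periodic_nat:
  fixes f :: "real \<Rightarrow> 'a"
  assumes "\<And>t. f (t + p) = f t"
  shows "f (t + real n * p) = f t"
proof (induction n)
  case 0 thus ?case by simp
next
  case (Suc n)
  have "f (t + real (Suc n) * p) = f ((t + real n * p) + p)" by (simp add: algebra_simps)
  also have "\<dots> = f (t + real n * p)" by (rule assms)
  finally show ?case using Suc by simp
qed

lemma periodic_int:
  fixes f :: "real \<Rightarrow> 'a"
  assumes "\<And>t. f (t + p) = f t"
  shows "f (t + of_int k * p) = f t"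
proof (cases "k \<ge> 0")
  case True
  then obtain n where "k = int n" by (metis nonneg_eq_int)
  thus ?thesis using periodic_nat[of f p, OF assms] by simp
next
  case False
  then obtain n where n: "k = - int n" by (metis nonpos_int_cases not_le less_imp_le)
  have "f ((t - real n * p) + real n * p) = f (t - real n * p)" by (rule periodic_nat[of f p, OF assms])
  thus ?thesis using n by simp
qed

lemma periodic_bounded:
  fixes f :: "real \<Rightarrow> real"
  assumes per: "\<And>t. f (t + p) = f t" and p: "p > 0" and c: "\<And>t. isCont f t"
  shows "bounded (range f)"
proof -
  have "range f \<subseteq> f ` {0..p}"
  proof
    fix y assume "y \<in> range f"
    then obtain t where t: "y = f t" by auto
    define k where "k = \<lfloor>t / p\<rfloor>"
    define t' where "t' = t - of_int k * p"
    have "of_int k \<le> t / p" "t / p < of_int k + 1" unfolding k_def by linarith+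
    hence "of_int k * p \<le> t" "t < (of_int k + 1) * p" using p by (simp_all add: field_simps)
    hence t'r: "t' \<in> {0..p}" unfolding t'_def by (auto simp: algebra_simps)
    have "f t = f (t' + of_int k * p)" by (simp add: t'_def)
    also have "\<dots> = f t'" by (rule periodic_int[of f p, OF per])
    finally show "y \<in> f ` {0..p}" using t t'r by auto
  qed
  moreover have "bounded (f ` {0..p})"
    by (rule compact_imp_bounded, rule compact_continuous_image)
       (auto intro: continuous_at_imp_continuous_on c)
  ultimately show ?thesis using bounded_subset by blast
qed

lemma deriv_periodic:
  fixes X Xd :: "real \<Rightarrow> real"
  assumes d: "\<And>t. (X has_real_derivative Xd t) (at t)" and per: "\<And>t. X (t + p) = X t"
  shows "Xd (t + p) = Xd t"
proof -
  have "((\<lambda>s. X (s + p)) has_real_derivative Xd (t + p) * 1) (at t)"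
    by (rule DERIV_chain2[OF d]) (rule derivative_eq_intros refl | simp)+
  hence "(X has_real_derivative Xd (t + p)) (at t)" using per by simp
  thus ?thesis using d DERIV_unique by blast
qed

lemma hill_zero:
  fixes y yd q :: "real \<Rightarrow> real"
  assumes d1: "\<And>t. (y has_real_derivative yd t) (at t)" and d2: "\<And>t. (yd has_real_derivative - q t * y t) (at t)"
    and b: "\<And>t. \<bar>q t\<bar> \<le> L" and z: "y t0 = 0" "yd t0 = 0"
  shows "y t = 0"
proof -
  have L: "L \<ge> 0" using b[of 0] by linarith
  show ?thesis
  proof (rule ode_zero[OF d1 d2 _ L z])
    fix t show "\<bar>- q t * y t\<bar> \<le> L * \<bar>y t\<bar>" using b[of t] by (simp add: abs_mult mult_right_mono)
  qed
qed

lemma unbounded_lin: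
  fixes y :: "real \<Rightarrow> real"
  assumes h: "\<And>n::nat. y (t + real n * p) = y t + real n * c" and c: "c \<noteq> 0"
  shows "\<not> bounded (range y)"
proof
  assume "bounded (range y)"
  then obtain B where B: "\<And>s. \<bar>y s\<bar> \<le> B" unfolding bounded_iff by auto
  obtain n :: nat where n: "(B + \<bar>y t\<bar>) / \<bar>c\<bar> < real n" using reals_Archimedean2 by blast
  hence "B + \<bar>y t\<bar> < real n * \<bar>c\<bar>" using c by (simp add: field_simps)
  moreover have "real n * \<bar>c\<bar> \<le> \<bar>y (t + real n * p)\<bar> + \<bar>y t\<bar>"
    using h[of n] by (simp add: abs_mult[symmetric])
  ultimately show False using B[of "t + real n * p"] by linarith
qed


lemma alg1:
  fixes a p g q n :: real
  assumes nd: "n = g\<^sup>2 + p\<^sup>2" and n0: "n \<noteq> 0"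
  shows "(1 - q) * (p\<^sup>2 - g\<^sup>2) / n\<^sup>2 * p + a * (- g) + (q * p * n - g * (2 * g * (q * p) - 2 * p * g)) / n\<^sup>2
     = - a * g + p / n"
proof -
  have num: "(1 - q) * (p\<^sup>2 - g\<^sup>2) * p + (q * p * n - g * (2 * g * (q * p) - 2 * p * g)) = p * n"
    unfolding nd by (simp add: algebra_simps power2_eq_square)
  have "(1 - q) * (p\<^sup>2 - g\<^sup>2) / n\<^sup>2 * p + (q * p * n - g * (2 * g * (q * p) - 2 * p * g)) / n\<^sup>2
      = ((1 - q) * (p\<^sup>2 - g\<^sup>2) * p + (q * p * n - g * (2 * g * (q * p) - 2 * p * g))) / n\<^sup>2"
    by (simp add: add_divide_distrib)
  also have "\<dots> = p / n" unfolding num using n0 by (simp add: power2_eq_square)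
  finally show ?thesis by (simp add: algebra_simps)
qed

lemma alg2:
  fixes a p g q n :: real
  assumes nd: "n = g\<^sup>2 + p\<^sup>2" and n0: "n \<noteq> 0"
  shows "- ((1 - q) * (p\<^sup>2 - g\<^sup>2) / n\<^sup>2 * g) - a * (q * p) + (- g * n - p * (2 * g * (q * p) - 2 * p * g)) / n\<^sup>2
     = - q * (a * p + g / n)"
proof -
  have num: "- ((1 - q) * (p\<^sup>2 - g\<^sup>2) * g) + (- g * n - p * (2 * g * (q * p) - 2 * p * g)) = - q * g * n"
    unfolding nd by (simp add: algebra_simps power2_eq_square)
  have "- ((1 - q) * (p\<^sup>2 - g\<^sup>2) / n\<^sup>2 * g) + (- g * n - p * (2 * g * (q * p) - 2 * p * g)) / n\<^sup>2
      = (- ((1 - q) * (p\<^sup>2 - g\<^sup>2) * g) + (- g * n - p * (2 * g * (q * p) - 2 * p * g))) / n\<^sup>2"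
    by (simp add: add_divide_distrib diff_divide_distrib)
  also have "\<dots> = - q * g / n" unfolding num using n0 by (simp add: power2_eq_square)
  finally show ?thesis by (simp add: algebra_simps)
qed

lemma y2_deriv:
  fixes P G q \<alpha> f :: "real \<Rightarrow> real"
  assumes dP: "\<And>t. (P has_real_derivative - G t) (at t)" and dG: "\<And>t. (G has_real_derivative q t * P t) (at t)"
    and d\<alpha>: "\<And>t. (\<alpha> has_real_derivative f t) (at t)"
    and f: "f t = (1 - q t) * ((P t)\<^sup>2 - (G t)\<^sup>2) / ((G t)\<^sup>2 + (P t)\<^sup>2)\<^sup>2"
    and N: "(G t)\<^sup>2 + (P t)\<^sup>2 \<noteq> 0"
  shows "((\<lambda>s. \<alpha> s * P s + G s / ((G s)\<^sup>2 + (P s)\<^sup>2)) has_real_derivative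
            - \<alpha> t * G t + P t / ((G t)\<^sup>2 + (P t)\<^sup>2)) (at t)"
    and "((\<lambda>s. - \<alpha> s * G s + P s / ((G s)\<^sup>2 + (P s)\<^sup>2)) has_real_derivative
            - q t * (\<alpha> t * P t + G t / ((G t)\<^sup>2 + (P t)\<^sup>2))) (at t)"
proof -
  have dN: "((\<lambda>s. (G s)\<^sup>2 + (P s)\<^sup>2) has_real_derivative 2 * G t * (q t * P t) - 2 * P t * G t) (at t)"
    using DERIV_add[OF DERIV_mult[OF dG dG] DERIV_mult[OF dP dP], of t]
    by (simp add: power2_eq_square algebra_simps)
  have d1: "((\<lambda>s. G s / ((G s)\<^sup>2 + (P s)\<^sup>2)) has_real_derivative
     (q t * P t * ((G t)\<^sup>2 + (P t)\<^sup>2) - G t * (2 * G t * (q t * P t) - 2 * P t * G t)) / ((G t)\<^sup>2 + (P t)\<^sup>2)\<^sup>2) (at t)"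
    using DERIV_divide[OF dG dN N] by (simp add: power2_eq_square)
  have d2: "((\<lambda>s. P s / ((G s)\<^sup>2 + (P s)\<^sup>2)) has_real_derivative
     (- G t * ((G t)\<^sup>2 + (P t)\<^sup>2) - P t * (2 * G t * (q t * P t) - 2 * P t * G t)) / ((G t)\<^sup>2 + (P t)\<^sup>2)\<^sup>2) (at t)"
    using DERIV_divide[OF dP dN N] by (simp add: power2_eq_square)
  have e1: "f t * P t + \<alpha> t * (- G t) + (q t * P t * ((G t)\<^sup>2 + (P t)\<^sup>2) - G t * (2 * G t * (q t * P t) - 2 * P t * G t)) / ((G t)\<^sup>2 + (P t)\<^sup>2)\<^sup>2
     = - \<alpha> t * G t + P t / ((G t)\<^sup>2 + (P t)\<^sup>2)"
    unfolding f by (rule alg1[OF refl N])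
  show "((\<lambda>s. \<alpha> s * P s + G s / ((G s)\<^sup>2 + (P s)\<^sup>2)) has_real_derivative
            - \<alpha> t * G t + P t / ((G t)\<^sup>2 + (P t)\<^sup>2)) (at t)"
    using DERIV_add[OF DERIV_mult[OF d\<alpha> dP] d1] e1 by (simp add: algebra_simps)
  have e2: "- (f t * G t) - \<alpha> t * (q t * P t) + (- G t * ((G t)\<^sup>2 + (P t)\<^sup>2) - P t * (2 * G t * (q t * P t) - 2 * P t * G t)) / ((G t)\<^sup>2 + (P t)\<^sup>2)\<^sup>2
     = - q t * (\<alpha> t * P t + G t / ((G t)\<^sup>2 + (P t)\<^sup>2))"
    unfolding f by (rule alg2[OF refl N])
  show "((\<lambda>s. - \<alpha> s * G s + P s / ((G s)\<^sup>2 + (P s)\<^sup>2)) has_real_derivative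
            - q t * (\<alpha> t * P t + G t / ((G t)\<^sup>2 + (P t)\<^sup>2))) (at t)"
    by (rule DERIV_cong[OF DERIV_add[OF DERIV_mult[OF DERIV_minus[OF d\<alpha>] dG] d2]]) (use e2 in \<open>simp add: algebra_simps\<close>)
qed

lemma confine_all:
  fixes g Y Yd :: "real \<Rightarrow> real"
  assumes J: "open J" "is_interval J" "0 \<in> J" and gc: "continuous_on J g" and sub: "{h1..x1} \<subseteq> J"
    and dY: "\<And>t. (Y has_real_derivative Yd t) (at t)" and dYd: "\<And>t. (Yd has_real_derivative - g (Y t)) (at t)"
    and Y0: "h1 < Y 0" "Y 0 < x1"
    and E0: "(Yd 0)\<^sup>2/2 + potential g (Y 0) < potential g h1" "(Yd 0)\<^sup>2/2 + potential g (Y 0) < potential g x1"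
  shows "h1 < Y t \<and> Y t < x1"
proof (cases "t \<ge> 0")
  case True
  show ?thesis by (rule confine[OF J gc sub dY dYd Y0 E0 True])
next
  case False
  have dY': "((\<lambda>s. Y (- s)) has_real_derivative - Yd (- s)) (at s)" for s
    using DERIV_chain2[OF dY DERIV_minus[OF DERIV_ident], of s] by simp
  have dYd': "((\<lambda>s. - Yd (- s)) has_real_derivative - g (Y (- s))) (at s)" for s
    using DERIV_minus[OF DERIV_chain2[OF dYd DERIV_minus[OF DERIV_ident], of s]] by simp
  have "h1 < Y (- (- t)) \<and> Y (- (- t)) < x1"
    by (rule confine[OF J gc sub dY' dYd', of "- t"]) (use Y0 E0 False in auto)
  thus ?thesis by simp
qed

lemma abs_le_1_sq: "\<bar>x::real\<bar> \<le> 1 + x\<^sup>2"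
proof (cases "\<bar>x\<bar> \<le> 1")
  case True thus ?thesis by (smt (verit) zero_le_power2)
next
  case False
  hence "\<bar>x\<bar> * 1 \<le> \<bar>x\<bar> * \<bar>x\<bar>" by (intro mult_left_mono) auto
  thus ?thesis by (simp add: power2_eq_square abs_mult_self)
qed

lemma eqF_alg:
  fixes ga gb q a b c :: real
  shows "(- ga - - gb) / c + q * ((a - b) / c) = - (ga - gb - q * (a - b)) / c"
  by (cases "c = 0") (simp_all add: field_simps)

lemma evA_alg:
  fixes w t0 tx k c :: real
  shows "(w + (t0 - tx) * k) / c + k * ((tx - t0) / c) = w / c"
  by (cases "c = 0") (simp_all add: field_simps)

lemma evB_alg:
  fixes y x x0 c :: real
  assumes "c = x - x0" "c \<noteq> 0"
  shows "1 + (y - x) / c = (y - x0) / c"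
  using assms by (simp add: field_simps)


theorem proposition3p2:
  fixes g g' :: "real \<Rightarrow> real" and J :: "real set"
    and X Xd :: "real \<Rightarrow> real \<Rightarrow> real"   \<comment> \<open>X t x0, and its time derivative Xd t x0\<close>
    and T :: "real \<Rightarrow> real" and x0 :: real
  assumes J: "open J" "is_interval J" "0 \<in> J"
    and g_C1: "\<And>x. x \<in> J \<Longrightarrow> (g has_real_derivative g' x) (at x)" "continuous_on J g'"
    and g0: "g 0 = 0" and g'0: "g' 0 > 0"
    and V_incr: "strict_mono_on (J \<inter> {0<..}) (potential g)"
    and V_decr: "\<And>x y. x \<in> J \<Longrightarrow> y \<in> J \<Longrightarrow> x < y \<Longrightarrow> y < 0 \<Longrightarrow>
                   potential g y < potential g x"
    and h_ex: "\<And>x. x \<in> J \<Longrightarrow>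
                 \<exists>!y. y \<in> J \<and> potential g y = potential g x \<and> sgn y = - sgn x"
    and X_ode: "\<And>x t. x \<in> J \<Longrightarrow> x > 0 \<Longrightarrow>
                 ((\<lambda>s. X s x) has_real_derivative Xd t x) (at t) \<and>
                 ((\<lambda>s. Xd s x) has_real_derivative (- g (X t x))) (at t)"
    and X_init: "\<And>x. x \<in> J \<Longrightarrow> x > 0 \<Longrightarrow> X 0 x = x \<and> Xd 0 x = 0"
    and T_period: "\<And>x. x \<in> J \<Longrightarrow> x > 0 \<Longrightarrow>
                 T x > 0 \<and> (\<forall>t. X (t + T x) x = X t x) \<and>
                 (\<forall>p. 0 < p \<and> p < T x \<longrightarrow> \<not> (\<forall>t. X (t + p) x = X t x))"
    and T_diff: "T differentiable (at x0)"
    and x0: "x0 \<in> J" "x0 > 0"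
  shows "((\<forall>y. hill_solution (\<lambda>t. g' (X t x0)) y \<longrightarrow> (\<forall>t. y (t + T x0) = y t))
          \<or> (\<forall>y. hill_solution (\<lambda>t. g' (X t x0)) y \<longrightarrow>
                (\<not> bounded (range y) \<longleftrightarrow> \<not> (\<exists>c. \<forall>t. y t = c * Xd t x0))))
        \<and> ((\<forall>y. hill_solution (\<lambda>t. g' (X t x0)) y \<longrightarrow> (\<forall>t. y (t + T x0) = y t))
             \<longleftrightarrow> deriv T x0 = 0)"
proof -
  have gc: "continuous_on J g" using g_C1(1) by (meson DERIV_isCont continuous_at_imp_continuous_on)
  obtain e where e: "e > 0" "ball x0 e \<subseteq> J" using openE[OF J(1) x0(1)] by blast
  define x1 where "x1 = x0 + e/2"
  have "x1 \<in> ball x0 e" using e by (simp add: x1_def dist_real_def)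
  hence x1J: "x1 \<in> J" using e by blast
  have x0x1: "x0 < x1" using e by (simp add: x1_def)
  obtain h1 where h1: "h1 \<in> J" "potential g h1 = potential g x1" "sgn h1 = - sgn x1"
    using h_ex[OF x1J] by blast
  have h1neg: "h1 < 0" using h1(3) x0 x0x1 by (auto simp: sgn_if split: if_splits)
  define K where "K = {h1..x1}"
  have Jiv: "\<And>a b y. a \<in> J \<Longrightarrow> b \<in> J \<Longrightarrow> a \<le> y \<Longrightarrow> y \<le> b \<Longrightarrow> y \<in> J"
    using J(2) unfolding is_interval_1 by blast
  have KJ: "K \<subseteq> J" unfolding K_def using Jiv[OF h1(1) x1J] by auto
  have inJ: "x \<in> J" if "0 < x" "x < x1" for x using Jiv[OF J(3) x1J, of x] that by auto
  have Vlt: "potential g x < potential g x1" if "0 < x" "x < x1" for x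
    using monotone_onD[OF V_incr, of x x1] that inJ x1J x0 x0x1 by auto
  have orbit: "h1 < X t x \<and> X t x < x1" if x: "0 < x" "x < x1" for x t
  proof (rule confine_all[OF J gc, of h1 x1 "\<lambda>s. X s x" "\<lambda>s. Xd s x" t])
    show "{h1..x1} \<subseteq> J" using KJ K_def by simp
    show "\<And>t. ((\<lambda>s. X s x) has_real_derivative Xd t x) (at t)" using X_ode inJ x by blast
    show "\<And>t. ((\<lambda>s. Xd s x) has_real_derivative - g (X t x)) (at t)" using X_ode inJ x by blast
    show "h1 < X 0 x" "X 0 x < x1" using X_init[OF inJ[OF x] x(1)] h1neg x by auto
    show "(Xd 0 x)\<^sup>2 / 2 + potential g (X 0 x) < potential g h1"
         "(Xd 0 x)\<^sup>2 / 2 + potential g (X 0 x) < potential g x1"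
      using X_init[OF inJ[OF x] x(1)] Vlt[OF x] h1(2) by auto
  qed
  have orbK: "X t x \<in> K" if "0 < x" "x < x1" for x t using orbit[OF that, of t] by (auto simp: K_def)
  have compK: "compact K" by (simp add: K_def)
  have g'K: "continuous_on K g'" using g_C1(2) KJ continuous_on_subset by blast
  have gK: "continuous_on K g" using gc KJ continuous_on_subset by blast
  obtain L where L: "L \<ge> 0" "\<And>a. a \<in> K \<Longrightarrow> \<bar>g' a\<bar> \<le> L"
  proof -
    have "bounded (g' ` K)" by (rule compact_imp_bounded, rule compact_continuous_image[OF g'K compK])
    then obtain B where "\<And>a. a \<in> K \<Longrightarrow> \<bar>g' a\<bar> \<le> B" unfolding bounded_iff by auto
    thus ?thesis using that[of "max B 0"] by fastforce
  qed
  obtain Gb where Gb: "Gb \<ge> 0" "\<And>a. a \<in> K \<Longrightarrow> \<bar>g a\<bar> \<le> Gb"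
  proof -
    have "bounded (g ` K)" by (rule compact_imp_bounded, rule compact_continuous_image[OF gK compK])
    then obtain B where "\<And>a. a \<in> K \<Longrightarrow> \<bar>g a\<bar> \<le> B" unfolding bounded_iff by auto
    thus ?thesis using that[of "max B 0"] by fastforce
  qed
  have betwK: "z \<in> K" if "a \<in> K" "b \<in> K" "min a b \<le> z" "z \<le> max a b" for a b z
    using that by (auto simp: K_def)
  have lip: "\<bar>g a - g b\<bar> \<le> L * \<bar>a - b\<bar>" if ab: "a \<in> K" "b \<in> K" for a b
  proof (rule mvt_abs_bound[of a b g g'])
    fix z assume "min a b \<le> z" "z \<le> max a b"
    hence zK: "z \<in> K" by (rule betwK[OF ab])
    show "(g has_real_derivative g' z) (at z)" using g_C1(1) KJ zK by blast
  next
    fix z assume "min a b \<le> z" "z \<le> max a b"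
    hence zK: "z \<in> K" by (rule betwK[OF ab])
    show "\<bar>g' z\<bar> \<le> L" using L(2) zK by blast
  qed
  have refine: "\<bar>g a - g b - g' b * (a - b)\<bar> \<le> \<epsilon> * \<bar>a - b\<bar>"
    if ab: "a \<in> K" "b \<in> K" and hz: "\<And>z. z \<in> K \<Longrightarrow> \<bar>z - b\<bar> \<le> \<bar>a - b\<bar> \<Longrightarrow> \<bar>g' z - g' b\<bar> \<le> \<epsilon>" for a b \<epsilon>
  proof -
    obtain z where z: "min a b \<le> z" "z \<le> max a b" "g a - g b = g' z * (a - b)"
      using mvt_between[of a b g g'] betwK[OF ab] KJ g_C1(1) by blast
    have zK: "z \<in> K" using betwK[OF ab z(1,2)] .
    have "\<bar>z - b\<bar> \<le> \<bar>a - b\<bar>" using z(1,2) by (auto simp: min_def max_def split: if_splits)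
    hence "\<bar>g' z - g' b\<bar> \<le> \<epsilon>" using hz zK by blast
    moreover have "g a - g b - g' b * (a - b) = (g' z - g' b) * (a - b)" using z(3) by (simp add: algebra_simps)
    ultimately show ?thesis by (simp add: abs_mult mult_right_mono)
  qed
  have ucg': "uniformly_continuous_on K g'" by (rule compact_uniformly_continuous[OF g'K compK])
  define T0 where "T0 = T x0"
  have T0: "T0 > 0" "\<And>t. X (t + T0) x0 = X t x0" "\<And>p. 0 < p \<Longrightarrow> p < T0 \<Longrightarrow> \<not> (\<forall>t. X (t + p) x0 = X t x0)"
    using T_period[OF x0] unfolding T0_def by auto
  define P where "P = (\<lambda>t. Xd t x0)"
  define G where "G = (\<lambda>t. g (X t x0))"
  define q where "q = (\<lambda>t. g' (X t x0))"
  have qeq: "(\<lambda>t. g' (X t x0)) = q" by (simp add: q_def)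
  have dX0: "((\<lambda>s. X s x0) has_real_derivative P t) (at t)" for t using X_ode[OF x0] by (simp add: P_def)
  have dP: "(P has_real_derivative - G t) (at t)" for t using X_ode[OF x0] unfolding P_def by (simp add: G_def)
  have X0K: "X t x0 \<in> K" for t using orbK[OF x0(2) x0x1] .
  have qb: "\<bar>q t\<bar> \<le> L" for t using L X0K by (simp add: q_def)
  have dG: "(G has_real_derivative q t * P t) (at t)" for t
    using DERIV_chain2[OF g_C1(1)[OF subsetD[OF KJ X0K]] dX0] by (simp add: G_def q_def)
  have Pper: "P (t + T0) = P t" for t unfolding P_def by (rule deriv_periodic[OF X_ode[OF x0, THEN conjunct1] T0(2)])
  have Gper: "G (t + T0) = G t" for t using T0(2) by (simp add: G_def)
  have qper: "q (t + T0) = q t" for t using T0(2) by (simp add: q_def)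
  have nonconst: False if c: "\<And>t. X t x0 = c" for c
    using T0(3)[of "T0/2"] T0(1) c by auto
  have Npos: "(G t)\<^sup>2 + (P t)\<^sup>2 \<noteq> 0" for t
  proof
    assume "(G t)\<^sup>2 + (P t)\<^sup>2 = 0"
    hence z: "G t = 0" "P t = 0" by (simp_all add: sum_power2_eq_zero_iff)
    define c where "c = X t x0"
    have gc0: "g c = 0" using z by (simp add: G_def c_def)
    have d1: "((\<lambda>s. X s x0 - c) has_real_derivative P s) (at s)" for s
      using DERIV_diff[OF dX0[of s] DERIV_const[of c "at s"]] by simp
    have d2: "(P has_real_derivative - (g (X s x0) - g c)) (at s)" for s using dP[of s] gc0 by (simp add: G_def)
    have "X s x0 - c = 0" for s
    proof (rule ode_zero[OF d1 d2 _ L(1)])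
      fix s show "\<bar>- (g (X s x0) - g c)\<bar> \<le> L * \<bar>X s x0 - c\<bar>"
        unfolding c_def abs_minus_cancel by (rule lip[OF X0K X0K])
      show "X t x0 - c = 0" by (simp add: c_def)
      show "P t = 0" by (rule z)
    qed
    thus False using nonconst[of c] by simp
  qed
  have P0: "P 0 = 0" and G0: "G 0 = g x0" using X_init[OF x0] by (simp_all add: P_def G_def)
  have gx0: "g x0 \<noteq> 0" using Npos[of 0] P0 G0 by simp
  have Pnz: "\<exists>t. P t \<noteq> 0"
  proof (rule ccontr)
    assume "\<not> ?thesis"
    hence "\<forall>t. ((\<lambda>s. X s x0) has_real_derivative 0) (at t)" using dX0 by fastforce
    hence "X t x0 = X 0 x0" for t by (rule DERIV_isconst_all)
    thus False using nonconst by blast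
  qed
  define f where "f = (\<lambda>t. (1 - q t) * ((P t)\<^sup>2 - (G t)\<^sup>2) / ((G t)\<^sup>2 + (P t)\<^sup>2)\<^sup>2)"
  have contP: "isCont P t" for t using dP DERIV_isCont by blast
  have contG: "isCont G t" for t using dG DERIV_isCont by blast
  have contq: "isCont q t" for t
  proof -
    have "isCont (\<lambda>s. X s x0) t" using dX0 DERIV_isCont by blast
    moreover have "isCont g' (X t x0)"
      using g_C1(2) J(1) subsetD[OF KJ X0K] continuous_on_eq_continuous_at by blast
    ultimately show ?thesis unfolding q_def by (rule isCont_o2)
  qed
  have contf: "continuous_on UNIV f"
    unfolding f_def using contP contG contq Npos
    by (intro continuous_at_imp_continuous_on ballI continuous_intros) auto
  define \<alpha> where "\<alpha> = potential f"
  have d\<alpha>: "(\<alpha> has_real_derivative f t) (at t)" for t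
    unfolding \<alpha>_def by (rule potential_deriv[OF open_UNIV is_interval_univ _ contf]) auto
  have \<alpha>0: "\<alpha> 0 = 0" by (simp add: \<alpha>_def potential_def)
  define \<kappa> where "\<kappa> = \<alpha> T0"
  have fper: "f (t + T0) = f t" for t by (simp add: f_def Pper Gper qper)
  have \<alpha>per: "\<alpha> (t + T0) = \<alpha> t + \<kappa>" for t
  proof -
    have dd: "((\<lambda>s. \<alpha> (s + T0) - \<alpha> s) has_real_derivative 0) (at u)" for u
    proof -
      have "((\<lambda>s. \<alpha> (s + T0)) has_real_derivative f (u + T0) * 1) (at u)"
        by (rule DERIV_chain2[OF d\<alpha>]) (rule derivative_eq_intros refl | simp)+
      from DERIV_diff[OF this d\<alpha>] show ?thesis by (simp add: fper)
    qed
    have "\<alpha> (t + T0) - \<alpha> t = \<alpha> (0 + T0) - \<alpha> 0"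
      using DERIV_isconst_all[of "\<lambda>s. \<alpha> (s + T0) - \<alpha> s" t 0] dd by simp
    thus ?thesis by (simp add: \<kappa>_def \<alpha>0)
  qed
  define y2 where "y2 = (\<lambda>s. \<alpha> s * P s + G s / ((G s)\<^sup>2 + (P s)\<^sup>2))"
  define y2d where "y2d = (\<lambda>s. - \<alpha> s * G s + P s / ((G s)\<^sup>2 + (P s)\<^sup>2))"
  have dy2: "(y2 has_real_derivative y2d t) (at t)" for t
    unfolding y2_def y2d_def by (rule y2_deriv(1)[OF dP dG d\<alpha> _ Npos]) (simp add: f_def)
  have dy2d: "(y2d has_real_derivative - q t * y2 t) (at t)" for t
    unfolding y2_def y2d_def by (rule y2_deriv(2)[OF dP dG d\<alpha> _ Npos]) (simp add: f_def)
  have y2per: "y2 (t + T0) = y2 t + \<kappa> * P t" for t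
    by (simp add: y2_def \<alpha>per Pper Gper) (simp add: algebra_simps)
  have y2dper: "y2d (t + T0) = y2d t - \<kappa> * G t" for t
    by (simp add: y2d_def \<alpha>per Pper Gper) (simp add: algebra_simps)
  have y20: "y2 0 = 1 / g x0" using P0 G0 gx0 by (simp add: y2_def power2_eq_square)
  have y2d0: "y2d 0 = 0" using P0 \<alpha>0 by (simp add: y2d_def)
  have dmG: "((\<lambda>s. - G s) has_real_derivative - q t * P t) (at t)" for t using DERIV_minus[OF dG] by simp
  have hillP: "hill_solution q P" unfolding hill_solution_def
    by (rule exI[of _ "\<lambda>s. - G s"]) (use dP dmG in simp)
  have hilly2: "hill_solution q y2" unfolding hill_solution_def
    by (rule exI[of _ y2d]) (use dy2 dy2d in simp)
  have decomp: "\<exists>a b. \<forall>t. y t = a * P t + b * y2 t" if hy: "hill_solution q y" for y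
  proof -
    obtain yd where yd: "\<And>t. (y has_real_derivative yd t) (at t)" "\<And>t. (yd has_real_derivative - q t * y t) (at t)"
      using hy unfolding hill_solution_def by blast
    define a where "a = - yd 0 / g x0"
    define b where "b = g x0 * y 0"
    define z where "z = (\<lambda>t. y t - a * P t - b * y2 t)"
    define zd where "zd = (\<lambda>t. yd t + a * G t - b * y2d t)"
    have dz: "(z has_real_derivative zd t) (at t)" for t
      unfolding z_def zd_def
      by (rule DERIV_cong[OF DERIV_diff[OF DERIV_diff[OF yd(1) DERIV_cmult[OF dP]] DERIV_cmult[OF dy2]]]) simp
    have dzd: "(zd has_real_derivative - q t * z t) (at t)" for t
      unfolding z_def zd_def
      by (rule DERIV_cong[OF DERIV_diff[OF DERIV_add[OF yd(2) DERIV_cmult[OF dG]] DERIV_cmult[OF dy2d]]])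
         (simp add: algebra_simps)
    have "z t = 0" for t
    proof (rule hill_zero[OF dz dzd qb])
      show "z 0 = 0" using y20 gx0 P0 by (simp add: z_def b_def)
      show "zd 0 = 0" using y2d0 gx0 G0 by (simp add: zd_def a_def)
    qed
    thus ?thesis by (intro exI[of _ a] exI[of _ b]) (simp add: z_def algebra_simps)
  qed
  have shift: "y (t + T0) = y t + b * \<kappa> * P t" if "\<And>t. y t = a * P t + b * y2 t" for y a b t
    using that[of t] that[of "t + T0"] by (simp add: y2per Pper) (simp add: algebra_simps)
  have key: "deriv T x0 = - \<kappa> * g x0"
  proof -
    have TD: "(T has_real_derivative deriv T x0) (at x0)"
      using T_diff DERIV_deriv_iff_real_differentiable by blast
    define T' where "T' = deriv T x0"
    define d0 where "d0 = min x0 (x1 - x0)"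
    have d0: "d0 > 0" using x0 x0x1 by (simp add: d0_def)
    have near: "0 < x \<and> x < x1" if "\<bar>x - x0\<bar> < d0" for x using that by (auto simp: d0_def)
    have ev: "eventually (\<lambda>x. 0 < x \<and> x < x1 \<and> x \<noteq> x0) (at x0)"
      unfolding eventually_at by (rule exI[of _ d0]) (use d0 near in \<open>auto simp: dist_real_def\<close>)
    have dXx: "((\<lambda>s. X s x) has_real_derivative Xd t x) (at t)" if "0 < x" "x < x1" for x t
      using X_ode inJ that by blast
    have dXdx: "((\<lambda>s. Xd s x) has_real_derivative - g (X t x)) (at t)" if "0 < x" "x < x1" for x t
      using X_ode inJ that by blast
    have Xperx: "X (t + T x) x = X t x" if "0 < x" "x < x1" for x t
      using T_period[OF inJ[OF that] that(1)] by blast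
    have Xdperx: "Xd (t + T x) x = Xd t x" if xr: "0 < x" "x < x1" for x t
      by (rule deriv_periodic[OF dXx[OF xr] Xperx[OF xr]])
    have Xinit: "X 0 x = x" "Xd 0 x = 0" if "0 < x" "x < x1" for x
      using X_init[OF inJ[OF that] that(1)] by auto
    have xK: "x \<in> K" if "0 < x" "x < x1" for x using that h1neg by (auto simp: K_def)
    define A where "A = (\<lambda>x. Xd T0 x / (x - x0))"
    define B where "B = (\<lambda>x. (X T0 x - x0) / (x - x0))"
    define \<Phi> where "\<Phi> = (\<lambda>x. A x / g x0 + \<kappa> * g x0 * B x)"
    have y2c: "continuous_on {0..T0} y2" using dy2 by (meson DERIV_isCont continuous_at_imp_continuous_on)
    obtain Yb where Yb: "Yb \<ge> 0" "\<And>t. t \<in> {0..T0} \<Longrightarrow> \<bar>y2 t\<bar> \<le> Yb"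
    proof -
      have "bounded (y2 ` {0..T0})" by (rule compact_imp_bounded, rule compact_continuous_image[OF y2c]) simp
      then obtain Bd where "\<forall>t\<in>{0..T0}. \<bar>y2 t\<bar> \<le> Bd" unfolding bounded_iff by auto
      thus ?thesis using that[of "max Bd 0"] by fastforce
    qed
    define M where "M = 1 + exp ((1 + L) * T0)"
    have Mpos: "M > 0" by (simp add: M_def add_pos_pos)
    have lim1: "(\<Phi> \<longlongrightarrow> 0) (at x0)"
      unfolding LIM_eq
    proof (intro allI impI)
      fix r :: real assume r: "r > 0"
      define \<epsilon> where "\<epsilon> = r / (T0 * Yb * M + 1)"
      have nn: "T0 * Yb * M \<ge> 0" using T0(1) Yb(1) Mpos by simp
      hence den: "T0 * Yb * M + 1 > 0" by linarith
      have \<epsilon>pos: "\<epsilon> > 0" using r den by (simp add: \<epsilon>_def)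
      obtain \<delta> where \<delta>: "\<delta> > 0" "\<And>z b. b \<in> K \<Longrightarrow> z \<in> K \<Longrightarrow> dist z b < \<delta> \<Longrightarrow> dist (g' z) (g' b) < \<epsilon>"
        using ucg'[unfolded uniformly_continuous_on_def, rule_format, OF \<epsilon>pos] by metis
      define s where "s = min d0 (\<delta> / M)"
      have spos: "s > 0" using d0 \<delta> Mpos by (simp add: s_def)
      show "\<exists>s>0. \<forall>x. x \<noteq> x0 \<and> norm (x - x0) < s \<longrightarrow> norm (\<Phi> x - 0) < r"
      proof (intro exI[of _ s] conjI allI impI spos)
        fix x assume xx: "x \<noteq> x0 \<and> norm (x - x0) < s"
        have xr: "0 < x" "x < x1" using near[of x] xx by (auto simp: s_def)
        have xne: "x - x0 \<noteq> 0" using xx by simp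
        have xs: "\<bar>x - x0\<bar> < s" using xx by simp
        define D where "D = (\<lambda>t. (X t x - X t x0) / (x - x0))"
        define Dd where "Dd = (\<lambda>t. (Xd t x - P t) / (x - x0))"
        define FD where "FD = (\<lambda>t. (- g (X t x) - - G t) / (x - x0))"
        have dD: "(D has_real_derivative Dd t) (at t)" for t
          unfolding D_def Dd_def by (rule DERIV_cdivide[OF DERIV_diff[OF dXx[OF xr] dX0]])
        have dDd: "(Dd has_real_derivative FD t) (at t)" for t
          unfolding Dd_def FD_def by (rule DERIV_cdivide[OF DERIV_diff[OF dXdx[OF xr] dP]])
        have FDb: "\<bar>FD t\<bar> \<le> L * \<bar>D t\<bar>" for t
        proof -
          have l: "\<bar>g (X t x) - g (X t x0)\<bar> \<le> L * \<bar>X t x - X t x0\<bar>" by (rule lip[OF orbK[OF xr] X0K])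
          have "\<bar>FD t\<bar> = \<bar>g (X t x) - g (X t x0)\<bar> / \<bar>x - x0\<bar>"
            by (simp add: FD_def G_def abs_divide abs_minus_commute)
          also have "\<dots> \<le> L * \<bar>X t x - X t x0\<bar> / \<bar>x - x0\<bar>" by (rule divide_right_mono[OF l]) simp
          also have "\<dots> = L * \<bar>D t\<bar>" by (simp add: D_def abs_divide)
          finally show ?thesis .
        qed
        have D0: "D 0 = 1" "Dd 0 = 0" using Xinit[OF xr] Xinit[OF x0(2) x0x1] P0 xne
          by (simp_all add: D_def Dd_def P_def)
        have Db: "\<bar>D t\<bar> \<le> M" if t: "0 \<le> t" "t \<le> T0" for t
        proof -
          have "(D t)\<^sup>2 + (Dd t)\<^sup>2 \<le> ((D 0)\<^sup>2 + (Dd 0)\<^sup>2) * exp ((1 + L) * t)"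
            by (rule ode_energy[OF dD dDd FDb L(1) t(1)])
          also have "\<dots> = exp ((1 + L) * t)" using D0 by simp
          also have "\<dots> \<le> exp ((1 + L) * T0)" using t L(1) by (simp add: mult_left_mono)
          finally have "(D t)\<^sup>2 \<le> exp ((1 + L) * T0)" by (smt (verit) zero_le_power2)
          thus ?thesis using abs_le_1_sq[of "D t"] by (simp add: M_def)
        qed
        define \<Phi>t where "\<Phi>t = (\<lambda>t. y2 t * Dd t - y2d t * D t)"
        have d\<Phi>: "(\<Phi>t has_real_derivative y2 t * (FD t + q t * D t)) (at t)" for t
          unfolding \<Phi>t_def
          by (rule DERIV_cong[OF DERIV_diff[OF DERIV_mult[OF dy2 dDd] DERIV_mult[OF dy2d dD]]])
             (simp add: algebra_simps)
        have bnd: "\<bar>y2 t * (FD t + q t * D t)\<bar> \<le> Yb * (\<epsilon> * M)" if t: "0 \<le> t" "t \<le> T0" for t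
        proof -
          define a where "a = X t x"
          define b where "b = X t x0"
          have aK: "a \<in> K" using orbK[OF xr] by (simp add: a_def)
          have bK: "b \<in> K" using X0K by (simp add: b_def)
          have ab: "a - b = D t * (x - x0)" using xne by (simp add: D_def a_def b_def)
          have "\<bar>a - b\<bar> \<le> M * \<bar>x - x0\<bar>" using Db[OF t] by (simp add: ab abs_mult mult_right_mono)
          also have "\<dots> < M * s" using xs Mpos by simp
          also have "\<dots> \<le> \<delta>" using Mpos by (simp add: s_def min_def field_simps)
          finally have hab: "\<bar>a - b\<bar> < \<delta>" .
          have r1: "\<bar>g a - g b - g' b * (a - b)\<bar> \<le> \<epsilon> * \<bar>a - b\<bar>"
          proof (rule refine[OF aK bK])
            fix z assume z: "z \<in> K" "\<bar>z - b\<bar> \<le> \<bar>a - b\<bar>"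
            have "dist z b < \<delta>" using z(2) hab by (simp add: dist_real_def)
            from \<delta>(2)[OF bK z(1) this] show "\<bar>g' z - g' b\<bar> \<le> \<epsilon>" by (simp add: dist_real_def)
          qed
          have eqF: "FD t + q t * D t = - (g a - g b - g' b * (a - b)) / (x - x0)"
            unfolding FD_def D_def G_def q_def a_def[symmetric] b_def[symmetric] by (rule eqF_alg)
          have "\<bar>FD t + q t * D t\<bar> = \<bar>g a - g b - g' b * (a - b)\<bar> / \<bar>x - x0\<bar>"
            unfolding eqF abs_divide abs_minus_cancel ..
          also have "\<dots> \<le> \<epsilon> * \<bar>a - b\<bar> / \<bar>x - x0\<bar>" by (rule divide_right_mono[OF r1]) simp
          also have "\<dots> = \<epsilon> * \<bar>D t\<bar>" using xne by (simp add: ab abs_mult)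
          also have "\<dots> \<le> \<epsilon> * M" using Db[OF t] \<epsilon>pos by simp
          finally have h2: "\<bar>FD t + q t * D t\<bar> \<le> \<epsilon> * M" .
          have "\<bar>y2 t * (FD t + q t * D t)\<bar> = \<bar>y2 t\<bar> * \<bar>FD t + q t * D t\<bar>" by (simp add: abs_mult)
          also have "\<dots> \<le> Yb * (\<epsilon> * M)" by (rule mult_mono[OF Yb(2) h2]) (use t Yb(1) in auto)
          finally show ?thesis .
        qed
        have "\<bar>\<Phi>t T0 - \<Phi>t 0\<bar> \<le> (Yb * (\<epsilon> * M)) * \<bar>T0 - 0\<bar>"
        proof (rule mvt_abs_bound[of T0 0 \<Phi>t])
          fix z assume "min T0 0 \<le> z" "z \<le> max T0 0"
          show "(\<Phi>t has_real_derivative y2 z * (FD z + q z * D z)) (at z)" by (rule d\<Phi>)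
        next
          fix z assume "min T0 0 \<le> z" "z \<le> max T0 0"
          hence "0 \<le> z" "z \<le> T0" using T0(1) by auto
          thus "\<bar>y2 z * (FD z + q z * D z)\<bar> \<le> Yb * (\<epsilon> * M)" by (rule bnd)
        qed
        moreover have "\<Phi>t 0 = 0" using D0 y2d0 by (simp add: \<Phi>t_def)
        moreover have "\<Phi>t T0 = \<Phi> x"
        proof -
          have "y2 T0 = 1 / g x0" using y2per[of 0] y20 P0 by simp
          moreover have "y2d T0 = - \<kappa> * g x0" using y2dper[of 0] y2d0 G0 by simp
          moreover have "P T0 = 0" using Pper[of 0] P0 by simp
          moreover have "X T0 x0 = x0" using T0(2)[of 0] Xinit[OF x0(2) x0x1] by simp
          ultimately show ?thesis
            by (simp add: \<Phi>t_def \<Phi>_def A_def B_def D_def Dd_def)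
        qed
        ultimately have "\<bar>\<Phi> x\<bar> \<le> Yb * (\<epsilon> * M) * T0" using T0(1) by simp
        also have "\<dots> = r * (T0 * Yb * M) / (T0 * Yb * M + 1)" by (simp add: \<epsilon>_def algebra_simps)
        also have "\<dots> < r" using den r by (simp add: field_simps)
        finally show "norm (\<Phi> x - 0) < r" by simp
      qed
    qed
    have Tc: "(T \<longlongrightarrow> T x0) (at x0)" using DERIV_isCont[OF TD] isCont_def by blast
    define Q where "Q = (\<lambda>x. (T x - T x0) / (x - x0))"
    have Qlim: "(Q \<longlongrightarrow> T') (at x0)" using TD unfolding has_field_derivative_iff Q_def T'_def .
    define sx where "sx = (\<lambda>x. T0 - T x)"
    have slim: "(sx \<longlongrightarrow> 0) (at x0)"
      unfolding sx_def using tendsto_diff[OF tendsto_const Tc, of T0] by (simp add: T0_def)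
    define R1 where "R1 = (\<lambda>x. (Xd (sx x) x + sx x * g x) / (x - x0))"
    define R2 where "R2 = (\<lambda>x. (X (sx x) x - x) / (x - x0))"
    have Xdb: "\<bar>Xd u x\<bar> \<le> Gb * \<bar>u\<bar>" if xr: "0 < x" "x < x1" for x u
    proof -
      have "\<bar>Xd u x - Xd 0 x\<bar> \<le> Gb * \<bar>u - 0\<bar>"
      proof (rule mvt_abs_bound[of u 0 "\<lambda>s. Xd s x" "\<lambda>s. - g (X s x)"])
        fix z show "((\<lambda>s. Xd s x) has_real_derivative - g (X z x)) (at z)" by (rule dXdx[OF xr])
        show "\<bar>- g (X z x)\<bar> \<le> Gb" using Gb(2)[OF orbK[OF xr]] by simp
      qed
      thus ?thesis using Xinit[OF xr] by simp
    qed
    have Xb: "\<bar>X u x - x\<bar> \<le> Gb * u\<^sup>2" if xr: "0 < x" "x < x1" for x u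
    proof -
      have "\<bar>X u x - X 0 x\<bar> \<le> (Gb * \<bar>u\<bar>) * \<bar>u - 0\<bar>"
      proof (rule mvt_abs_bound[of u 0 "\<lambda>s. X s x" "\<lambda>s. Xd s x"])
        fix z show "((\<lambda>s. X s x) has_real_derivative Xd z x) (at z)" by (rule dXx[OF xr])
      next
        fix z assume "min u 0 \<le> z" "z \<le> max u 0"
        hence "\<bar>z\<bar> \<le> \<bar>u\<bar>" by (auto simp: min_def max_def split: if_splits)
        thus "\<bar>Xd z x\<bar> \<le> Gb * \<bar>u\<bar>" using Xdb[OF xr, of z] Gb(1) by (meson mult_left_mono order_trans)
      qed
      thus ?thesis using Xinit[OF xr] by (simp add: power2_eq_square abs_mult_self)
    qed
    have Wb: "\<bar>Xd u x + u * g x\<bar> \<le> (L * Gb * u\<^sup>2) * \<bar>u\<bar>" if xr: "0 < x" "x < x1" for x u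
    proof -
      have "\<bar>(Xd u x + u * g x) - (Xd 0 x + 0 * g x)\<bar> \<le> (L * Gb * u\<^sup>2) * \<bar>u - 0\<bar>"
      proof (rule mvt_abs_bound[of u 0 "\<lambda>s. Xd s x + s * g x" "\<lambda>s. - g (X s x) + 1 * g x"])
        fix z show "((\<lambda>s. Xd s x + s * g x) has_real_derivative - g (X z x) + 1 * g x) (at z)"
          by (rule DERIV_add[OF dXdx[OF xr] DERIV_cmult_right[OF DERIV_ident]])
      next
        fix z assume "min u 0 \<le> z" "z \<le> max u 0"
        hence zu: "\<bar>z\<bar> \<le> \<bar>u\<bar>" by (auto simp: min_def max_def split: if_splits)
        have "\<bar>- g (X z x) + 1 * g x\<bar> = \<bar>g (X z x) - g x\<bar>" by simp
        also have "\<dots> \<le> L * \<bar>X z x - x\<bar>" by (rule lip[OF orbK[OF xr] xK[OF xr]])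
        also have "\<dots> \<le> L * (Gb * z\<^sup>2)" by (rule mult_left_mono[OF Xb[OF xr] L(1)])
        also have "\<dots> \<le> L * (Gb * u\<^sup>2)"
        proof -
          have "z\<^sup>2 \<le> u\<^sup>2" using zu by (metis abs_le_square_iff)
          thus ?thesis using L(1) Gb(1) by (simp add: mult_left_mono)
        qed
        finally show "\<bar>- g (X z x) + 1 * g x\<bar> \<le> L * Gb * u\<^sup>2" by (simp add: mult.assoc)
      qed
      thus ?thesis using Xinit[OF xr] by simp
    qed
    have evA: "eventually (\<lambda>x. R1 x + g x * Q x = A x) (at x0)"
      using ev
    proof (rule eventually_mono)
      fix x assume "0 < x \<and> x < x1 \<and> x \<noteq> x0"
      hence xr: "0 < x" "x < x1" and xne: "x - x0 \<noteq> 0" by auto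
      have "Xd T0 x = Xd (sx x + T x) x" by (simp add: sx_def)
      also have "\<dots> = Xd (sx x) x" by (rule Xdperx[OF xr])
      finally have e: "Xd T0 x = Xd (sx x) x" .
      show "R1 x + g x * Q x = A x"
        unfolding R1_def Q_def A_def e unfolding sx_def T0_def by (rule evA_alg)
    qed
    have evB: "eventually (\<lambda>x. 1 + R2 x = B x) (at x0)"
      using ev
    proof (rule eventually_mono)
      fix x assume "0 < x \<and> x < x1 \<and> x \<noteq> x0"
      hence xr: "0 < x" "x < x1" and xne: "x - x0 \<noteq> 0" by auto
      have "X T0 x = X (sx x + T x) x" by (simp add: sx_def)
      also have "\<dots> = X (sx x) x" by (rule Xperx[OF xr])
      finally have e: "X T0 x = X (sx x) x" .
      show "1 + R2 x = B x"
        unfolding R2_def B_def e by (rule evB_alg[OF refl xne])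
    qed
    have absQ: "\<bar>sx x\<bar> / \<bar>x - x0\<bar> = \<bar>Q x\<bar>" for x
      by (simp add: sx_def Q_def T0_def abs_divide abs_minus_commute)
    have R1lim: "(R1 \<longlongrightarrow> 0) (at x0)"
    proof (rule Lim_null_comparison)
      show "eventually (\<lambda>x. norm (R1 x) \<le> L * Gb * (sx x)\<^sup>2 * \<bar>Q x\<bar>) (at x0)"
        using ev
      proof (rule eventually_mono)
        fix x assume "0 < x \<and> x < x1 \<and> x \<noteq> x0"
        hence xr: "0 < x" "x < x1" and xne: "x - x0 \<noteq> 0" by auto
        have "norm (R1 x) = \<bar>Xd (sx x) x + sx x * g x\<bar> / \<bar>x - x0\<bar>" by (simp add: R1_def abs_divide)
        also have "\<dots> \<le> (L * Gb * (sx x)\<^sup>2) * \<bar>sx x\<bar> / \<bar>x - x0\<bar>"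
          by (rule divide_right_mono[OF Wb[OF xr]]) simp
        also have "\<dots> = L * Gb * (sx x)\<^sup>2 * \<bar>Q x\<bar>" by (simp add: absQ[symmetric])
        finally show "norm (R1 x) \<le> L * Gb * (sx x)\<^sup>2 * \<bar>Q x\<bar>" .
      qed
      have "((\<lambda>x. L * Gb * (sx x)\<^sup>2 * \<bar>Q x\<bar>) \<longlongrightarrow> L * Gb * 0\<^sup>2 * \<bar>T'\<bar>) (at x0)"
        by (intro tendsto_intros slim Qlim)
      thus "((\<lambda>x. L * Gb * (sx x)\<^sup>2 * \<bar>Q x\<bar>) \<longlongrightarrow> 0) (at x0)" by simp
    qed
    have R2lim: "(R2 \<longlongrightarrow> 0) (at x0)"
    proof (rule Lim_null_comparison)
      show "eventually (\<lambda>x. norm (R2 x) \<le> Gb * \<bar>sx x\<bar> * \<bar>Q x\<bar>) (at x0)"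
        using ev
      proof (rule eventually_mono)
        fix x assume "0 < x \<and> x < x1 \<and> x \<noteq> x0"
        hence xr: "0 < x" "x < x1" and xne: "x - x0 \<noteq> 0" by auto
        have "norm (R2 x) = \<bar>X (sx x) x - x\<bar> / \<bar>x - x0\<bar>" by (simp add: R2_def abs_divide)
        also have "\<dots> \<le> (Gb * \<bar>sx x\<bar>) * \<bar>sx x\<bar> / \<bar>x - x0\<bar>"
          by (rule divide_right_mono) (use Xb[OF xr, of "sx x"] in \<open>simp_all add: power2_eq_square abs_mult_self\<close>)
        also have "\<dots> = Gb * \<bar>sx x\<bar> * \<bar>Q x\<bar>" by (simp add: absQ[symmetric])
        finally show "norm (R2 x) \<le> Gb * \<bar>sx x\<bar> * \<bar>Q x\<bar>" .
      qed
      have "((\<lambda>x. Gb * \<bar>sx x\<bar> * \<bar>Q x\<bar>) \<longlongrightarrow> Gb * \<bar>0\<bar> * \<bar>T'\<bar>) (at x0)"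
        by (intro tendsto_intros slim Qlim)
      thus "((\<lambda>x. Gb * \<bar>sx x\<bar> * \<bar>Q x\<bar>) \<longlongrightarrow> 0) (at x0)" by simp
    qed
    have gcx0: "(g \<longlongrightarrow> g x0) (at x0)"
      using DERIV_isCont[OF g_C1(1)[OF x0(1)]] isCont_def by blast
    have Alim: "(A \<longlongrightarrow> 0 + g x0 * T') (at x0)"
      by (rule Lim_transform_eventually[OF tendsto_add[OF R1lim tendsto_mult[OF gcx0 Qlim]] evA])
    have Blim: "(B \<longlongrightarrow> 1 + 0) (at x0)"
      by (rule Lim_transform_eventually[OF tendsto_add[OF tendsto_const R2lim] evB])
    have lim2: "(\<Phi> \<longlongrightarrow> (0 + g x0 * T') / g x0 + \<kappa> * g x0 * (1 + 0)) (at x0)"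
      unfolding \<Phi>_def by (intro tendsto_intros Alim Blim gx0)
    have "0 = (0 + g x0 * T') / g x0 + \<kappa> * g x0 * (1 + 0)"
      by (rule tendsto_unique[OF _ lim1 lim2]) simp
    thus ?thesis using gx0 by (simp add: T'_def)
  qed
  have allper: "(\<forall>y. hill_solution q y \<longrightarrow> (\<forall>t. y (t + T0) = y t)) \<longleftrightarrow> \<kappa> = 0"
  proof
    assume h: "\<forall>y. hill_solution q y \<longrightarrow> (\<forall>t. y (t + T0) = y t)"
    obtain t where t: "P t \<noteq> 0" using Pnz by blast
    have "y2 (t + T0) = y2 t" using h hilly2 by blast
    thus "\<kappa> = 0" using t y2per[of t] by simp
  next
    assume k: "\<kappa> = 0"
    show "\<forall>y. hill_solution q y \<longrightarrow> (\<forall>t. y (t + T0) = y t)"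
    proof (intro allI impI)
      fix y t assume "hill_solution q y"
      then obtain a b where "\<And>t. y t = a * P t + b * y2 t" using decomp by blast
      thus "y (t + T0) = y t" using shift k by simp
    qed
  qed
  have bddP: "bounded (range P)" by (rule periodic_bounded[OF Pper T0(1) contP])
  have dich: "\<kappa> \<noteq> 0 \<Longrightarrow> hill_solution q y \<Longrightarrow> (\<not> bounded (range y) \<longleftrightarrow> \<not> (\<exists>c. \<forall>t. y t = c * P t))" for y
  proof -
    assume k: "\<kappa> \<noteq> 0" and hy: "hill_solution q y"
    obtain a b where ab: "\<And>t. y t = a * P t + b * y2 t" using decomp[OF hy] by blast
    show ?thesis
    proof (cases "b = 0")
      case True
      have hprop: "\<exists>c. \<forall>t. y t = c * P t" using ab True by auto
      have "bounded (range y)"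
      proof -
        obtain B where B: "\<And>t. \<bar>P t\<bar> \<le> B" using bddP unfolding bounded_iff by auto
        have "\<bar>y t\<bar> \<le> \<bar>a\<bar> * B" for t using ab[of t] True B[of t] by (simp add: abs_mult mult_left_mono)
        thus ?thesis unfolding bounded_iff by auto
      qed
      thus ?thesis using hprop by simp
    next
      case False
      obtain t where t: "P t \<noteq> 0" using Pnz by blast
      have sh: "y (s + T0) = y s + b * \<kappa> * P s" for s by (rule shift[OF ab])
      have nsh: "y (t + real n * T0) = y t + real n * (b * \<kappa> * P t)" for n :: nat
      proof (induction n)
        case 0 thus ?case by simp
      next
        case (Suc n)
        have "y (t + real (Suc n) * T0) = y ((t + real n * T0) + T0)" by (simp add: algebra_simps)
        also have "\<dots> = y (t + real n * T0) + b * \<kappa> * P (t + real n * T0)" by (rule sh)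
        also have "P (t + real n * T0) = P t" by (rule periodic_nat[of P T0, OF Pper])
        finally show ?case using Suc by (simp add: algebra_simps)
      qed
      have nb: "\<not> bounded (range y)" by (rule unbounded_lin[OF nsh]) (use False k t in simp)
      have np: "\<not> (\<exists>c. \<forall>t. y t = c * P t)"
      proof
        assume "\<exists>c. \<forall>t. y t = c * P t"
        then obtain c where c: "\<And>t. y t = c * P t" by blast
        have "y (t + T0) = y t" using c[of t] c[of "t + T0"] Pper by simp
        thus False using sh[of t] False k t by simp
      qed
      show ?thesis using nb np by simp
    qed
  qed
  show ?thesis
    unfolding qeq T0_def[symmetric]
    using allper dich[unfolded P_def] key gx0 by auto
qed


end
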